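(* Let $\theta_\ast>0$ and $\sigma>0$. There exists a constant $C(\theta_\ast,\sigma^2)>0$ such that for every $1$-Lipschitz function $\ell:\mathbb R\to\mathbb R$ with $\ell(0)=0$ and every integer $k\ge1$, there exists a polynomial $P_{k-1}(\theta)=\sum_{x=0}^{k-1}c_x\theta^x$ whose coefficients satisfy $$|c_x|\le\frac{C(\theta_\ast,\sigma^2)(x+1)^{1/2}2^x\big(1+(x/(e\sigma^2))^{x/2}\big)}{x!},\qquad 0\le x\le k-1,$$ and such that $$\sup_{\theta\in[0,\theta_\ast]}\big|\ell_\sigma(\theta)-\ell_\sigma(0)-e^{-\theta}P_{k-1}(\theta)\big|\le\frac{C(\theta_\ast,\sigma^2)(k+1)^{1/2}(2\theta_\ast)^k\big(1+(k/(e\sigma^2))^{k/2}\big)}{k!}.$$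
   Context: $\varphi_\sigma$ is the density of $\mathcal N(0,\sigma^2)$ and $\ell_\sigma=\ell\ast\varphi_\sigma$, i.e. $\ell_\sigma(\theta)=\int_{\mathbb R}\ell(\theta-y)\varphi_\sigma(y)\,\mathrm dy$. The convention $0^0=1$ is used. *)

theory Defs
  imports "HOL-Analysis.Analysis"
begin

definition gauss_dens :: "real \<Rightarrow> real \<Rightarrow> real" where
  "gauss_dens \<sigma> y = exp (- (y\<^sup>2) / (2 * \<sigma>\<^sup>2)) / sqrt (2 * pi * \<sigma>\<^sup>2)"

definition smooth :: "(real \<Rightarrow> real) \<Rightarrow> real \<Rightarrow> real \<Rightarrow> real" where
  "smooth l \<sigma> \<theta> = (\<integral>y. l (\<theta> - y) * gauss_dens \<sigma> y \<partial>lborel)"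

definition pow00 :: "real \<Rightarrow> real \<Rightarrow> real" where
  "pow00 a b = (if a = 0 then (if b = 0 then 1 else 0) else a powr b)"

end

theory Submission
  imports Defs "HOL-Probability.Probability" "HOL-Real_Asymp.Real_Asymp"
begin

definition qc :: "real \<Rightarrow> nat \<Rightarrow> real" where
  "qc c i = (if even i then c ^ (i div 2) / fact (i div 2) else 0)"

lemma qc_sums: "(\<lambda>i. qc c i * x ^ i) sums exp (c * x\<^sup>2)"
proof -
  have "(\<lambda>n. (c * x\<^sup>2) ^ n /\<^sub>R fact n) sums exp (c * x\<^sup>2)" by (rule exp_converges)
  moreover have "(\<lambda>n. (c * x\<^sup>2) ^ n /\<^sub>R fact n) = (\<lambda>n. qc c (2*n) * x ^ (2*n))"
  proof
    fix n
    have "x ^ (2*n) = (x\<^sup>2) ^ n" by (simp add: power_mult)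
    then show "(c * x\<^sup>2) ^ n /\<^sub>R fact n = qc c (2*n) * x ^ (2*n)"
      by (simp add: qc_def power_mult_distrib divide_inverse_commute)
  qed
  ultimately have "(\<lambda>n. qc c (2*n) * x ^ (2*n)) sums exp (c * x\<^sup>2)" by simp
  then show ?thesis
    by (subst sums_mono_reindex[of "\<lambda>n. 2*n", symmetric])
       (auto simp: strict_mono_def qc_def elim!: evenE)
qed

lemma qc_abs: "c \<ge> 0 \<Longrightarrow> \<bar>qc (-c) i\<bar> = qc c i"
  by (auto simp: qc_def power_minus' abs_mult power_abs)

lemma gd_eq: "gauss_dens s = normal_density 0 s"
  by (auto simp: fun_eq_iff gauss_dens_def normal_density_def)

lemma normal_mgf:
  assumes s: "s > 0"
  shows "has_bochner_integral lborel (\<lambda>u. normal_density 0 s u * exp (t * u)) (exp (t\<^sup>2 * s\<^sup>2 / 2))"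
proof -
  have eq: "normal_density 0 s u * exp (t * u) = exp (t\<^sup>2 * s\<^sup>2 / 2) * normal_density (t * s\<^sup>2) s u" for u
  proof -
    have "- (u - 0)\<^sup>2 / (2 * s\<^sup>2) + t * u = - (u - t * s\<^sup>2)\<^sup>2 / (2 * s\<^sup>2) + t\<^sup>2 * s\<^sup>2 / 2"
      using s by (simp add: field_simps power2_eq_square)
    then show ?thesis
      unfolding normal_density_def by (simp add: exp_add[symmetric] mult_ac)
  qed
  have "has_bochner_integral lborel (\<lambda>u. exp (t\<^sup>2 * s\<^sup>2 / 2) * normal_density (t * s\<^sup>2) s u) (exp (t\<^sup>2 * s\<^sup>2 / 2) * 1)"
    using s by (intro has_bochner_integral_mult_right) (simp add: has_bochner_integral_iff)
  then show ?thesis by (simp add: eq)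
qed

lemma normal_exp_abs:
  assumes s: "s > 0"
  shows "integrable lborel (\<lambda>u. normal_density 0 s u * exp (t * \<bar>u\<bar>))"
    and "(\<integral>u. normal_density 0 s u * exp (t * \<bar>u\<bar>) \<partial>lborel) \<le> 2 * exp (t\<^sup>2 * s\<^sup>2 / 2)"
proof -
  have h1: "has_bochner_integral lborel (\<lambda>u. normal_density 0 s u * exp (t * u)) (exp (t\<^sup>2 * s\<^sup>2 / 2))"
    using normal_mgf[OF s] .
  have h2: "has_bochner_integral lborel (\<lambda>u. normal_density 0 s u * exp ((-t) * u)) (exp (t\<^sup>2 * s\<^sup>2 / 2))"
    using normal_mgf[OF s, of "-t"] by simp
  have hs: "has_bochner_integral lborel (\<lambda>u. normal_density 0 s u * exp (t * u) + normal_density 0 s u * exp ((-t) * u)) (exp (t\<^sup>2 * s\<^sup>2 / 2) + exp (t\<^sup>2 * s\<^sup>2 / 2))"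
    by (rule has_bochner_integral_add[OF h1 h2])
  have le: "normal_density 0 s u * exp (t * \<bar>u\<bar>) \<le> normal_density 0 s u * exp (t * u) + normal_density 0 s u * exp ((-t) * u)" for u
  proof -
    have "exp (t * \<bar>u\<bar>) \<le> exp (t * u) + exp ((-t) * u)"
      by (cases "u \<ge> 0") (auto simp: add_increasing add_increasing2)
    then show ?thesis using normal_density_nonneg[of 0 s u]
      by (simp add: distrib_left[symmetric] mult_left_mono)
  qed
  show int: "integrable lborel (\<lambda>u. normal_density 0 s u * exp (t * \<bar>u\<bar>))"
    apply (rule Bochner_Integration.integrable_bound[OF integrable.intros[OF hs]])
     apply measurable
    using le by (auto intro!: AE_I2 simp: abs_of_nonneg)
  have "(\<integral>u. normal_density 0 s u * exp (t * \<bar>u\<bar>) \<partial>lborel) \<le> (\<integral>u. normal_density 0 s u * exp (t * u) + normal_density 0 s u * exp ((-t) * u) \<partial>lborel)"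
    by (rule integral_mono[OF int integrable.intros[OF hs] le])
  also have "\<dots> = 2 * exp (t\<^sup>2 * s\<^sup>2 / 2)" using has_bochner_integral_integral_eq[OF hs] by simp
  finally show "(\<integral>u. normal_density 0 s u * exp (t * \<bar>u\<bar>) \<partial>lborel) \<le> 2 * exp (t\<^sup>2 * s\<^sup>2 / 2)" .
qed

definition cq :: "real \<Rightarrow> real" where "cq s = 1 / (2 * s\<^sup>2)"
definition vv :: "real \<Rightarrow> real \<Rightarrow> real" where "vv s u = 1 + u / s\<^sup>2"
definition pc :: "real \<Rightarrow> nat \<Rightarrow> real \<Rightarrow> real" where
  "pc s n u = (\<Sum>i\<le>n. qc (- cq s) i * vv s u ^ (n - i) / fact (n - i)) - 1 / fact n"
definition pa :: "real \<Rightarrow> nat \<Rightarrow> real \<Rightarrow> real" where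
  "pa s n u = (\<Sum>i\<le>n. qc (cq s) i * \<bar>vv s u\<bar> ^ (n - i) / fact (n - i)) + 1 / fact n"

lemma cq_nonneg: "cq s \<ge> 0" by (simp add: cq_def)

lemma qc_nonneg: "c \<ge> 0 \<Longrightarrow> qc c i \<ge> 0" by (simp add: qc_def)

lemma pa_nonneg: "pa s n u \<ge> 0"
  unfolding pa_def by (intro add_nonneg_nonneg sum_nonneg divide_nonneg_nonneg mult_nonneg_nonneg qc_nonneg cq_nonneg) auto

lemma abs_pc_le: "\<bar>pc s n u\<bar> \<le> pa s n u"
proof -
  have "\<bar>pc s n u\<bar> \<le> \<bar>\<Sum>i\<le>n. qc (- cq s) i * vv s u ^ (n - i) / fact (n - i)\<bar> + \<bar>1 / fact n\<bar>"
    unfolding pc_def by (rule abs_triangle_ineq4)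
  also have "\<bar>\<Sum>i\<le>n. qc (- cq s) i * vv s u ^ (n - i) / fact (n - i)\<bar> \<le> (\<Sum>i\<le>n. \<bar>qc (- cq s) i * vv s u ^ (n - i) / fact (n - i)\<bar>)"
    by (rule sum_abs)
  also have "\<dots> = (\<Sum>i\<le>n. qc (cq s) i * \<bar>vv s u\<bar> ^ (n - i) / fact (n - i))"
    using cq_nonneg by (intro sum.cong) (auto simp: abs_mult qc_abs power_abs)
  finally show ?thesis unfolding pa_def by simp
qed

lemma cauchy_aux:
  fixes c y x :: real
  shows "(\<lambda>n. (\<Sum>i\<le>n. qc c i * y ^ (n - i) / fact (n - i)) * x ^ n) sums (exp (c * x\<^sup>2) * exp (x * y))"
proof -
  have sa: "(\<lambda>i. qc c i * x ^ i) sums exp (c * x\<^sup>2)" by (rule qc_sums)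
  have sb: "(\<lambda>j. (x * y) ^ j / fact j) sums exp (x * y)"
    using exp_converges[of "x * y"] by (simp add: divide_inverse_commute)
  have na: "summable (\<lambda>i. norm (qc c i * x ^ i))"
  proof -
    have "(\<lambda>i. qc \<bar>c\<bar> i * \<bar>x\<bar> ^ i) sums exp (\<bar>c\<bar> * \<bar>x\<bar>\<^sup>2)" by (rule qc_sums)
    moreover have "norm (qc c i * x ^ i) = qc \<bar>c\<bar> i * \<bar>x\<bar> ^ i" for i
      by (auto simp: qc_def abs_mult power_abs)
    ultimately show ?thesis by (simp add: sums_iff)
  qed
  have nb: "summable (\<lambda>j. norm ((x * y) ^ j / fact j))"
  proof -
    have "(\<lambda>j. \<bar>x * y\<bar> ^ j / fact j) sums exp \<bar>x * y\<bar>"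
      using exp_converges[of "\<bar>x * y\<bar>"] by (simp add: divide_inverse_commute)
    then show ?thesis by (simp add: sums_iff power_abs)
  qed
  have eq: "(\<Sum>i\<le>n. qc c i * x ^ i * ((x * y) ^ (n - i) / fact (n - i))) =
            (\<Sum>i\<le>n. qc c i * y ^ (n - i) / fact (n - i)) * x ^ n" for n
  proof -
    have "(\<Sum>i\<le>n. qc c i * x ^ i * ((x * y) ^ (n - i) / fact (n - i))) =
          (\<Sum>i\<le>n. qc c i * y ^ (n - i) / fact (n - i) * x ^ n)"
    proof (intro sum.cong refl)
      fix i assume "i \<in> {..n}"
      then have "x ^ i * x ^ (n - i) = x ^ n" by (simp add: power_add[symmetric])
      then show "qc c i * x ^ i * ((x * y) ^ (n - i) / fact (n - i)) = qc c i * y ^ (n - i) / fact (n - i) * x ^ n"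
        by (simp add: power_mult_distrib field_simps)
    qed
    then show ?thesis by (simp add: sum_distrib_right)
  qed
  show "(\<lambda>n. (\<Sum>i\<le>n. qc c i * y ^ (n - i) / fact (n - i)) * x ^ n) sums (exp (c * x\<^sup>2) * exp (x * y))"
  proof -
    have "(\<lambda>k. \<Sum>i\<le>k. qc c i * x ^ i * ((x * y) ^ (k - i) / fact (k - i))) sums (exp (c * x\<^sup>2) * exp (x * y))"
      using Cauchy_product_sums[OF na nb] sums_unique[OF sa] sums_unique[OF sb] by simp
    then show ?thesis by (simp only: eq)
  qed
qed

lemma cauchy_abs_summable:
  fixes c y x :: real
  assumes c: "c \<ge> 0"
  shows "summable (\<lambda>n. \<bar>(\<Sum>i\<le>n. qc c i * y ^ (n - i) / fact (n - i)) * x ^ n\<bar>)"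
proof (rule summable_comparison_test)
  show "summable (\<lambda>n. (\<Sum>i\<le>n. qc c i * \<bar>y\<bar> ^ (n - i) / fact (n - i)) * \<bar>x\<bar> ^ n)"
    using cauchy_aux[of c "\<bar>y\<bar>" "\<bar>x\<bar>"] by (simp add: sums_iff)
  show "\<exists>N. \<forall>n\<ge>N. norm \<bar>(\<Sum>i\<le>n. qc c i * y ^ (n - i) / fact (n - i)) * x ^ n\<bar> \<le> (\<Sum>i\<le>n. qc c i * \<bar>y\<bar> ^ (n - i) / fact (n - i)) * \<bar>x\<bar> ^ n"
  proof (intro exI allI impI)
    fix n
    have "\<bar>\<Sum>i\<le>n. qc c i * y ^ (n - i) / fact (n - i)\<bar> \<le> (\<Sum>i\<le>n. \<bar>qc c i * y ^ (n - i) / fact (n - i)\<bar>)"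
      by (rule sum_abs)
    also have "\<dots> = (\<Sum>i\<le>n. qc c i * \<bar>y\<bar> ^ (n - i) / fact (n - i))"
      using c by (intro sum.cong) (auto simp: abs_mult power_abs qc_nonneg)
    finally show "norm \<bar>(\<Sum>i\<le>n. qc c i * y ^ (n - i) / fact (n - i)) * x ^ n\<bar> \<le> (\<Sum>i\<le>n. qc c i * \<bar>y\<bar> ^ (n - i) / fact (n - i)) * \<bar>x\<bar> ^ n"
      by (simp add: abs_mult power_abs mult_right_mono)
  qed
qed

lemma pc_sums: "(\<lambda>n. pc s n u * \<theta> ^ n) sums (exp (- cq s * \<theta>\<^sup>2) * exp (\<theta> * vv s u) - exp \<theta>)"
proof -
  have e: "(\<lambda>n. \<theta> ^ n / fact n) sums exp \<theta>"
    using exp_converges[of \<theta>] by (simp add: divide_inverse_commute)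
  have "(\<lambda>n. (\<Sum>i\<le>n. qc (- cq s) i * vv s u ^ (n - i) / fact (n - i)) * \<theta> ^ n - \<theta> ^ n / fact n) sums (exp (- cq s * \<theta>\<^sup>2) * exp (\<theta> * vv s u) - exp \<theta>)"
    by (rule sums_diff[OF cauchy_aux e])
  then show ?thesis by (simp add: pc_def left_diff_distrib)
qed

lemma pa_sums: "(\<lambda>n. pa s n u * r ^ n) sums (exp (cq s * r\<^sup>2) * exp (r * \<bar>vv s u\<bar>) + exp r)"
proof -
  have e: "(\<lambda>n. r ^ n / fact n) sums exp r"
    using exp_converges[of r] by (simp add: divide_inverse_commute)
  have "(\<lambda>n. (\<Sum>i\<le>n. qc (cq s) i * \<bar>vv s u\<bar> ^ (n - i) / fact (n - i)) * r ^ n + r ^ n / fact n) sums (exp (cq s * r\<^sup>2) * exp (r * \<bar>vv s u\<bar>) + exp r)"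
    by (rule sums_add[OF cauchy_aux e])
  then show ?thesis by (simp add: pa_def distrib_right)
qed

definition BB :: "real \<Rightarrow> real \<Rightarrow> real \<Rightarrow> real" where
  "BB s u r = exp (cq s * r\<^sup>2) * exp (r * \<bar>vv s u\<bar>) + exp r"
definition DD :: "real \<Rightarrow> real \<Rightarrow> real \<Rightarrow> real" where
  "DD s r u = normal_density 0 s u * (exp (r + cq s * r\<^sup>2) * exp ((r / s\<^sup>2 + 1) * \<bar>u\<bar>) + exp r * exp (1 * \<bar>u\<bar>))"
definition MM :: "real \<Rightarrow> real \<Rightarrow> real" where
  "MM s r = 4 * exp (s\<^sup>2 / 2) * exp (r\<^sup>2 / s\<^sup>2 + 2 * r)"

lemma pa_le_BB:
  assumes r: "r \<ge> 0" shows "(\<Sum>n<N. pa s n u * r ^ n) \<le> BB s u r"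
proof -
  have "(\<Sum>n<N. pa s n u * r ^ n) \<le> (\<Sum>n. pa s n u * r ^ n)"
    using pa_sums[of s u r] pa_nonneg r
    by (intro sum_le_suminf) (auto simp: sums_iff intro!: mult_nonneg_nonneg)
  then show ?thesis unfolding BB_def using sums_unique[OF pa_sums[of s u r]] by simp
qed

lemma BB_ge1: "r \<ge> 0 \<Longrightarrow> BB s u r \<ge> 1"
  unfolding BB_def by (smt (verit) exp_ge_zero mult_nonneg_nonneg one_le_exp_iff)

lemma dom_BB:
  assumes s: "s > 0" and r: "r \<ge> 0" and l: "\<bar>l u\<bar> \<le> \<bar>u\<bar>"
  shows "\<bar>l u * normal_density 0 s u\<bar> * BB s u r \<le> DD s r u"
proof -
  have v: "\<bar>vv s u\<bar> \<le> 1 + \<bar>u\<bar> / s\<^sup>2"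
    unfolding vv_def using abs_triangle_ineq[of 1 "u / s\<^sup>2"] by (simp add: abs_divide)
  have "exp (r * \<bar>vv s u\<bar>) \<le> exp (r * (1 + \<bar>u\<bar> / s\<^sup>2))"
    using v r by (simp add: mult_left_mono)
  also have "\<dots> = exp r * exp (r / s\<^sup>2 * \<bar>u\<bar>)" by (simp add: distrib_left exp_add[symmetric])
  finally have e1: "exp (r * \<bar>vv s u\<bar>) \<le> exp r * exp (r / s\<^sup>2 * \<bar>u\<bar>)" .
  have B: "BB s u r \<le> exp (r + cq s * r\<^sup>2) * exp (r / s\<^sup>2 * \<bar>u\<bar>) + exp r"
    unfolding BB_def using e1 by (simp add: exp_add mult_ac)
  have lu: "\<bar>l u\<bar> \<le> exp \<bar>u\<bar>" using l by (smt (verit) exp_ge_add_one_self)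
  have "\<bar>l u * normal_density 0 s u\<bar> * BB s u r \<le> exp \<bar>u\<bar> * normal_density 0 s u * BB s u r"
    using lu BB_ge1[OF r, of s u] by (simp add: abs_mult mult_right_mono)
  also have "\<dots> \<le> exp \<bar>u\<bar> * normal_density 0 s u * (exp (r + cq s * r\<^sup>2) * exp (r / s\<^sup>2 * \<bar>u\<bar>) + exp r)"
    using B by (simp add: mult_left_mono)
  also have "\<dots> = DD s r u"
    unfolding DD_def by (simp add: distrib_left distrib_right exp_add mult_ac)
  finally show ?thesis .
qed

lemma DD_int:
  assumes s: "s > 0" and r: "r \<ge> 0"
  shows "integrable lborel (DD s r)" and "integral\<^sup>L lborel (DD s r) \<le> MM s r"
proof -
  let ?A = "exp (r + cq s * r\<^sup>2)" and ?t = "r / s\<^sup>2 + 1"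
  have i1: "integrable lborel (\<lambda>u. normal_density 0 s u * exp (?t * \<bar>u\<bar>))"
    and j1: "(\<integral>u. normal_density 0 s u * exp (?t * \<bar>u\<bar>) \<partial>lborel) \<le> 2 * exp (?t\<^sup>2 * s\<^sup>2 / 2)"
    using normal_exp_abs[OF s] by blast+
  have i2: "integrable lborel (\<lambda>u. normal_density 0 s u * exp (1 * \<bar>u\<bar>))"
    and j2: "(\<integral>u. normal_density 0 s u * exp (1 * \<bar>u\<bar>) \<partial>lborel) \<le> 2 * exp (1\<^sup>2 * s\<^sup>2 / 2)"
    using normal_exp_abs[OF s] by blast+
  have eq: "DD s r = (\<lambda>u. ?A * (normal_density 0 s u * exp (?t * \<bar>u\<bar>)) + exp r * (normal_density 0 s u * exp (1 * \<bar>u\<bar>)))"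
    unfolding DD_def by (auto simp: fun_eq_iff algebra_simps)
  show "integrable lborel (DD s r)" unfolding eq using i1 i2 by simp
  have "integral\<^sup>L lborel (DD s r) = ?A * (\<integral>u. normal_density 0 s u * exp (?t * \<bar>u\<bar>) \<partial>lborel) + exp r * (\<integral>u. normal_density 0 s u * exp (1 * \<bar>u\<bar>) \<partial>lborel)"
    unfolding eq using i1 i2 by simp
  also have "\<dots> \<le> ?A * (2 * exp (?t\<^sup>2 * s\<^sup>2 / 2)) + exp r * (2 * exp (1\<^sup>2 * s\<^sup>2 / 2))"
    using j1 j2 by (intro add_mono mult_left_mono) auto
  also have "?A * (2 * exp (?t\<^sup>2 * s\<^sup>2 / 2)) = 2 * exp (s\<^sup>2 / 2) * exp (r\<^sup>2 / s\<^sup>2 + 2 * r)"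
  proof -
    have "r + cq s * r\<^sup>2 + ?t\<^sup>2 * s\<^sup>2 / 2 = s\<^sup>2 / 2 + (r\<^sup>2 / s\<^sup>2 + 2 * r)"
      using s by (simp add: cq_def field_simps power2_eq_square)
    then show ?thesis by (simp add: exp_add[symmetric])
  qed
  also have "exp r * (2 * exp (1\<^sup>2 * s\<^sup>2 / 2)) \<le> 2 * exp (s\<^sup>2 / 2) * exp (r\<^sup>2 / s\<^sup>2 + 2 * r)"
  proof -
    have "r \<le> r\<^sup>2 / s\<^sup>2 + 2 * r" using r s by simp
    then show ?thesis by simp
  qed
  finally show "integral\<^sup>L lborel (DD s r) \<le> MM s r" unfolding MM_def by simp
qed

lemma pc_meas[measurable]: "(\<lambda>u. pc s n u) \<in> borel_measurable borel"
  unfolding pc_def vv_def by measurable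
lemma pa_meas[measurable]: "(\<lambda>u. pa s n u) \<in> borel_measurable borel"
  unfolding pa_def vv_def by measurable
lemma BB_meas[measurable]: "(\<lambda>u. BB s u r) \<in> borel_measurable borel"
  unfolding BB_def vv_def by measurable
lemma DD_meas[measurable]: "DD s r \<in> borel_measurable borel"
  unfolding DD_def by measurable

lemma pa_term_le_BB: "r \<ge> 0 \<Longrightarrow> pa s n u * r ^ n \<le> BB s u r"
proof -
  assume r: "r \<ge> 0"
  have "pa s n u * r ^ n \<le> (\<Sum>m<Suc n. pa s m u * r ^ m)"
    using r pa_nonneg by (simp add: sum_nonneg)
  also have "\<dots> \<le> BB s u r" by (rule pa_le_BB[OF r])
  finally show ?thesis .
qed

definition aa :: "(real \<Rightarrow> real) \<Rightarrow> real \<Rightarrow> nat \<Rightarrow> real" where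
  "aa l s n = (\<integral>u. l u * normal_density 0 s u * pc s n u \<partial>lborel)"

lemma integrable_dom:
  assumes s: "s > 0" and r: "r \<ge> 0" and lm[measurable]: "l \<in> borel_measurable borel"
    and lb: "\<And>u. \<bar>l u\<bar> \<le> \<bar>u\<bar>"
    and fm[measurable]: "f \<in> borel_measurable borel"
    and fb: "\<And>u. \<bar>f u\<bar> \<le> BB s u r"
  shows "integrable lborel (\<lambda>u. l u * normal_density 0 s u * f u)"
proof (rule Bochner_Integration.integrable_bound[OF DD_int(1)[OF s r]])
  show "(\<lambda>u. l u * normal_density 0 s u * f u) \<in> borel_measurable lborel" by measurable
  show "AE u in lborel. norm (l u * normal_density 0 s u * f u) \<le> norm (DD s r u)"
  proof (intro AE_I2)
    fix u
    have "norm (l u * normal_density 0 s u * f u) = \<bar>l u * normal_density 0 s u\<bar> * \<bar>f u\<bar>"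
      by (simp add: abs_mult)
    also have "\<dots> \<le> \<bar>l u * normal_density 0 s u\<bar> * BB s u r"
      by (rule mult_left_mono[OF fb]) simp
    also have "\<dots> \<le> DD s r u" by (rule dom_BB[OF s r lb])
    also have "\<dots> \<le> norm (DD s r u)" by simp
    finally show "norm (l u * normal_density 0 s u * f u) \<le> norm (DD s r u)" .
  qed
qed

lemma integrable_absdom:
  assumes s: "s > 0" and r: "r \<ge> 0" and lm[measurable]: "l \<in> borel_measurable borel"
    and lb: "\<And>u. \<bar>l u\<bar> \<le> \<bar>u\<bar>"
    and fm[measurable]: "f \<in> borel_measurable borel"
    and fb: "\<And>u. \<bar>f u\<bar> \<le> BB s u r"
  shows "integrable lborel (\<lambda>u. \<bar>l u * normal_density 0 s u\<bar> * \<bar>f u\<bar>)"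
  using integrable_abs[OF integrable_dom[OF s r lm lb fm fb]] by (simp add: abs_mult)

lemma aa_major:
  assumes s: "s > 0" and r: "r \<ge> 0" and lm[measurable]: "l \<in> borel_measurable borel"
    and lb: "\<And>u. \<bar>l u\<bar> \<le> \<bar>u\<bar>"
  shows "(\<Sum>n<N. \<bar>aa l s n\<bar> * r ^ n) \<le> MM s r"
proof -
  let ?w = "\<lambda>u. l u * normal_density 0 s u"
  have intn: "integrable lborel (\<lambda>u. \<bar>?w u\<bar> * (pa s n u * r ^ n))" for n
  proof -
    have "integrable lborel (\<lambda>u. \<bar>?w u\<bar> * \<bar>pa s n u * r ^ n\<bar>)"
      using pa_nonneg r by (intro integrable_absdom[OF s r lm lb]) (auto intro!: pa_term_le_BB)
    then show ?thesis using pa_nonneg r by (simp add: abs_mult)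
  qed
  have pcB: "\<bar>pc s n u\<bar> \<le> BB s u 1" for n u
  proof -
    have "\<bar>pc s n u\<bar> \<le> pa s n u" by (rule abs_pc_le)
    also have "\<dots> = pa s n u * 1 ^ n" by simp
    also have "\<dots> \<le> BB s u 1" by (rule pa_term_le_BB) simp
    finally show ?thesis .
  qed
  have paB: "\<bar>pa s n u\<bar> \<le> BB s u 1" for n u
    using pa_term_le_BB[of 1 s n u] pa_nonneg[of s n u] by simp
  have intc: "integrable lborel (\<lambda>u. \<bar>?w u\<bar> * \<bar>pc s n u\<bar>)" for n
    by (rule integrable_absdom[OF s _ lm lb _ pcB]) auto
  have intp: "integrable lborel (\<lambda>u. \<bar>?w u\<bar> * \<bar>pa s n u\<bar>)" for n
    by (rule integrable_absdom[OF s _ lm lb _ paB]) auto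
  have a_le: "\<bar>aa l s n\<bar> * r ^ n \<le> (\<integral>u. \<bar>?w u\<bar> * (pa s n u * r ^ n) \<partial>lborel)" for n
  proof -
    have "\<bar>aa l s n\<bar> \<le> (\<integral>u. \<bar>?w u * pc s n u\<bar> \<partial>lborel)"
      unfolding aa_def by (rule integral_abs_bound)
    also have "\<dots> = (\<integral>u. \<bar>?w u\<bar> * \<bar>pc s n u\<bar> \<partial>lborel)" by (simp add: abs_mult)
    also have "\<dots> \<le> (\<integral>u. \<bar>?w u\<bar> * \<bar>pa s n u\<bar> \<partial>lborel)"
      using intc intp by (intro integral_mono) (auto intro!: mult_left_mono order.trans[OF abs_pc_le])
    also have "\<dots> = (\<integral>u. \<bar>?w u\<bar> * pa s n u \<partial>lborel)" using pa_nonneg by simp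
    finally have "\<bar>aa l s n\<bar> * r ^ n \<le> (\<integral>u. \<bar>?w u\<bar> * pa s n u \<partial>lborel) * r ^ n"
      using r by (simp add: mult_right_mono)
    also have "\<dots> = (\<integral>u. \<bar>?w u\<bar> * (pa s n u * r ^ n) \<partial>lborel)"
      by (simp add: mult.assoc[symmetric])
    finally show ?thesis .
  qed
  have "(\<Sum>n<N. \<bar>aa l s n\<bar> * r ^ n) \<le> (\<Sum>n<N. (\<integral>u. \<bar>?w u\<bar> * (pa s n u * r ^ n) \<partial>lborel))"
    by (intro sum_mono a_le)
  also have "\<dots> = (\<integral>u. (\<Sum>n<N. \<bar>?w u\<bar> * (pa s n u * r ^ n)) \<partial>lborel)"
    using intn by (simp add: integral_sum)
  also have "\<dots> \<le> integral\<^sup>L lborel (DD s r)"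
  proof (rule integral_mono)
    show "integrable lborel (\<lambda>u. \<Sum>n<N. \<bar>?w u\<bar> * (pa s n u * r ^ n))" using intn by simp
    show "integrable lborel (DD s r)" by (rule DD_int(1)[OF s r])
    fix u
    have "(\<Sum>n<N. \<bar>?w u\<bar> * (pa s n u * r ^ n)) = \<bar>?w u\<bar> * (\<Sum>n<N. pa s n u * r ^ n)"
      by (simp add: sum_distrib_left)
    also have "\<dots> \<le> \<bar>?w u\<bar> * BB s u r" by (intro mult_left_mono pa_le_BB r) simp
    also have "\<dots> \<le> DD s r u" by (rule dom_BB[OF s r lb])
    finally show "(\<Sum>n<N. \<bar>?w u\<bar> * (pa s n u * r ^ n)) \<le> DD s r u" .
  qed
  also have "\<dots> \<le> MM s r" by (rule DD_int(2)[OF s r])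
  finally show ?thesis .
qed

lemma pa_int_sum:
  assumes s: "s > 0" and r: "r \<ge> 0" and lm[measurable]: "l \<in> borel_measurable borel"
    and lb: "\<And>u. \<bar>l u\<bar> \<le> \<bar>u\<bar>"
  shows "integrable lborel (\<lambda>u. \<bar>l u * normal_density 0 s u\<bar> * (pa s n u * r ^ n))"
    and "(\<Sum>n<N. (\<integral>u. \<bar>l u * normal_density 0 s u\<bar> * (pa s n u * r ^ n) \<partial>lborel)) \<le> MM s r"
proof -
  let ?w = "\<lambda>u. l u * normal_density 0 s u"
  have intn: "integrable lborel (\<lambda>u. \<bar>?w u\<bar> * (pa s n u * r ^ n))" for n
  proof -
    have "integrable lborel (\<lambda>u. \<bar>?w u\<bar> * \<bar>pa s n u * r ^ n\<bar>)"
      using pa_nonneg r by (intro integrable_absdom[OF s r lm lb]) (auto intro!: pa_term_le_BB)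
    then show ?thesis using pa_nonneg r by (simp add: abs_mult)
  qed
  then show "integrable lborel (\<lambda>u. \<bar>l u * normal_density 0 s u\<bar> * (pa s n u * r ^ n))" .
  have "(\<Sum>n<N. (\<integral>u. \<bar>?w u\<bar> * (pa s n u * r ^ n) \<partial>lborel)) = (\<integral>u. (\<Sum>n<N. \<bar>?w u\<bar> * (pa s n u * r ^ n)) \<partial>lborel)"
    using intn by (simp add: integral_sum)
  also have "\<dots> \<le> integral\<^sup>L lborel (DD s r)"
  proof (rule integral_mono)
    show "integrable lborel (\<lambda>u. \<Sum>n<N. \<bar>?w u\<bar> * (pa s n u * r ^ n))" using intn by simp
    show "integrable lborel (DD s r)" by (rule DD_int(1)[OF s r])
    fix u
    have "(\<Sum>n<N. \<bar>?w u\<bar> * (pa s n u * r ^ n)) = \<bar>?w u\<bar> * (\<Sum>n<N. pa s n u * r ^ n)"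
      by (simp add: sum_distrib_left)
    also have "\<dots> \<le> \<bar>?w u\<bar> * BB s u r" by (intro mult_left_mono pa_le_BB r) simp
    also have "\<dots> \<le> DD s r u" by (rule dom_BB[OF s r lb])
    finally show "(\<Sum>n<N. \<bar>?w u\<bar> * (pa s n u * r ^ n)) \<le> DD s r u" .
  qed
  also have "\<dots> \<le> MM s r" by (rule DD_int(2)[OF s r])
  finally show "(\<Sum>n<N. (\<integral>u. \<bar>l u * normal_density 0 s u\<bar> * (pa s n u * r ^ n) \<partial>lborel)) \<le> MM s r" .
qed

lemma aa_sums:
  assumes s: "s > 0" and lm[measurable]: "l \<in> borel_measurable borel"
    and lb: "\<And>u. \<bar>l u\<bar> \<le> \<bar>u\<bar>"
  shows "(\<lambda>n. aa l s n * \<theta> ^ n) sums (\<integral>u. l u * normal_density 0 s u * (exp (- cq s * \<theta>\<^sup>2) * exp (\<theta> * vv s u) - exp \<theta>) \<partial>lborel)"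
proof -
  define w where "w = (\<lambda>u. l u * normal_density 0 s u)"
  have wm[measurable]: "w \<in> borel_measurable borel" unfolding w_def by measurable
  define r where "r = \<bar>\<theta>\<bar>"
  have r: "r \<ge> 0" unfolding r_def by simp
  define f where "f = (\<lambda>i u. w u * (pc s i u * \<theta> ^ i))"
  have fb: "\<bar>pc s i u * \<theta> ^ i\<bar> \<le> pa s i u * r ^ i" for i u
    unfolding r_def by (simp add: abs_mult power_abs mult_right_mono abs_pc_le)
  have fbB: "\<bar>pc s i u * \<theta> ^ i\<bar> \<le> BB s u r" for i u
    using order.trans[OF fb pa_term_le_BB[OF r]] .
  have nf: "norm (f i u) \<le> \<bar>w u\<bar> * (pa s i u * r ^ i)" for i u
  proof -
    have "norm (f i u) = \<bar>w u\<bar> * \<bar>pc s i u * \<theta> ^ i\<bar>" unfolding f_def by (simp add: abs_mult)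
    also have "\<dots> \<le> \<bar>w u\<bar> * (pa s i u * r ^ i)" by (rule mult_left_mono[OF fb abs_ge_zero])
    finally show ?thesis .
  qed
  have int: "integrable lborel (f i)" for i
    unfolding f_def w_def by (rule integrable_dom[OF s r lm lb _ fbB]) measurable
  have intp: "integrable lborel (\<lambda>u. \<bar>w u\<bar> * (pa s i u * r ^ i))" for i
    unfolding w_def by (rule pa_int_sum(1)[OF s r lm lb])
  have "(\<lambda>i. integral\<^sup>L lborel (f i)) sums (\<integral>u. (\<Sum>i. f i u) \<partial>lborel)"
  proof (rule sums_integral[OF int])
    show "AE u in lborel. summable (\<lambda>i. norm (f i u))"
    proof (rule AE_I2)
      fix u
      have sm: "summable (\<lambda>i. \<bar>w u\<bar> * (pa s i u * r ^ i))"
        using pa_sums[of s u r] by (intro summable_mult) (simp add: sums_iff)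
      show "summable (\<lambda>i. norm (f i u))"
        by (rule summable_comparison_test[OF _ sm]) (use nf in simp)
    qed
    show "summable (\<lambda>i. \<integral>u. norm (f i u) \<partial>lborel)"
    proof (rule summableI_nonneg_bounded)
      fix N
      have "(\<Sum>i<N. \<integral>u. norm (f i u) \<partial>lborel) \<le> (\<Sum>i<N. \<integral>u. \<bar>w u\<bar> * (pa s i u * r ^ i) \<partial>lborel)"
      proof (rule sum_mono)
        fix i assume "i \<in> {..<N}"
        show "(\<integral>u. norm (f i u) \<partial>lborel) \<le> (\<integral>u. \<bar>w u\<bar> * (pa s i u * r ^ i) \<partial>lborel)"
          by (rule integral_mono[OF integrable_norm[OF int] intp nf])
      qed
      also have "\<dots> \<le> MM s r" unfolding w_def by (rule pa_int_sum(2)[OF s r lm lb])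
      finally show "(\<Sum>i<N. \<integral>u. norm (f i u) \<partial>lborel) \<le> MM s r" .
    next
      fix n show "0 \<le> (\<integral>u. norm (f n u) \<partial>lborel)" by (rule integral_nonneg_AE) simp
    qed
  qed
  moreover have "integral\<^sup>L lborel (f i) = aa l s i * \<theta> ^ i" for i
  proof -
    have "f i = (\<lambda>u. (l u * normal_density 0 s u * pc s i u) * \<theta> ^ i)"
      unfolding f_def w_def by (simp add: fun_eq_iff mult.assoc)
    then show ?thesis unfolding aa_def by (simp only: integral_mult_left_zero)
  qed
  moreover have "(\<Sum>i. f i u) = l u * normal_density 0 s u * (exp (- cq s * \<theta>\<^sup>2) * exp (\<theta> * vv s u) - exp \<theta>)" for u
  proof -
    have "(\<lambda>i. w u * (pc s i u * \<theta> ^ i)) sums (w u * (exp (- cq s * \<theta>\<^sup>2) * exp (\<theta> * vv s u) - exp \<theta>))"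
      by (rule sums_mult[OF pc_sums])
    then show ?thesis unfolding f_def w_def by (rule sums_unique[symmetric])
  qed
  ultimately show ?thesis by simp
qed

lemma smooth_shift: "smooth l s \<theta> = (\<integral>u. l u * gauss_dens s (\<theta> - u) \<partial>lborel)"
  unfolding smooth_def
  using lborel_integral_real_affine[of "-1" "\<lambda>y. l (\<theta> - y) * gauss_dens s y" \<theta>] by simp

lemma gd_shift:
  assumes s: "s > 0"
  shows "exp \<theta> * gauss_dens s (\<theta> - u) = normal_density 0 s u * (exp (- cq s * \<theta>\<^sup>2) * exp (\<theta> * vv s u))"
proof -
  have "\<theta> + (- (\<theta> - u)\<^sup>2 / (2 * s\<^sup>2)) = - (u - 0)\<^sup>2 / (2 * s\<^sup>2) + (- cq s * \<theta>\<^sup>2 + \<theta> * vv s u)"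
    using s by (simp add: cq_def vv_def field_simps power2_eq_square)
  then have "exp \<theta> * exp (- (\<theta> - u)\<^sup>2 / (2 * s\<^sup>2)) = exp (- (u - 0)\<^sup>2 / (2 * s\<^sup>2)) * (exp (- cq s * \<theta>\<^sup>2) * exp (\<theta> * vv s u))"
    by (simp only: exp_add[symmetric])
  then show ?thesis unfolding gauss_dens_def normal_density_def
    by (simp add: field_simps)
qed

lemma E_le_BB: "\<bar>exp (- cq s * \<theta>\<^sup>2) * exp (\<theta> * vv s u)\<bar> \<le> BB s u \<bar>\<theta>\<bar>"
proof -
  have "exp (- cq s * \<theta>\<^sup>2) \<le> exp (cq s * \<bar>\<theta>\<bar>\<^sup>2)" using cq_nonneg[of s]
    by (simp add: mult_nonneg_nonneg)
  moreover have "exp (\<theta> * vv s u) \<le> exp (\<bar>\<theta>\<bar> * \<bar>vv s u\<bar>)"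
    by (simp add: abs_mult[symmetric] abs_ge_self)
  ultimately have "exp (- cq s * \<theta>\<^sup>2) * exp (\<theta> * vv s u) \<le> exp (cq s * \<bar>\<theta>\<bar>\<^sup>2) * exp (\<bar>\<theta>\<bar> * \<bar>vv s u\<bar>)"
    by (intro mult_mono) auto
  then show ?thesis unfolding BB_def
    by (simp add: add_increasing2)
qed

lemma h_repr:
  assumes s: "s > 0" and lm[measurable]: "l \<in> borel_measurable borel"
    and lb: "\<And>u. \<bar>l u\<bar> \<le> \<bar>u\<bar>"
  shows "exp \<theta> * (smooth l s \<theta> - smooth l s 0) = (\<integral>u. l u * normal_density 0 s u * (exp (- cq s * \<theta>\<^sup>2) * exp (\<theta> * vv s u) - exp \<theta>) \<partial>lborel)"
proof -
  have i1: "integrable lborel (\<lambda>u. l u * normal_density 0 s u * (exp (- cq s * \<theta>\<^sup>2) * exp (\<theta> * vv s u)))"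
    by (rule integrable_dom[OF s abs_ge_zero lm lb _ E_le_BB]) (unfold vv_def, measurable)
  have i0: "integrable lborel (\<lambda>u. l u * normal_density 0 s u * 1)"
    by (rule integrable_dom[OF s order_refl lm lb _ BB_ge1[OF order_refl, THEN order.trans[rotated]]]) auto
  have "exp \<theta> * smooth l s \<theta> = (\<integral>u. l u * normal_density 0 s u * (exp (- cq s * \<theta>\<^sup>2) * exp (\<theta> * vv s u)) \<partial>lborel)"
  proof -
    have "exp \<theta> * smooth l s \<theta> = (\<integral>u. l u * (exp \<theta> * gauss_dens s (\<theta> - u)) \<partial>lborel)"
      unfolding smooth_shift by (simp add: mult_ac)
    also have "\<dots> = (\<integral>u. l u * normal_density 0 s u * (exp (- cq s * \<theta>\<^sup>2) * exp (\<theta> * vv s u)) \<partial>lborel)"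
      by (simp add: gd_shift[OF s] mult.assoc)
    finally show ?thesis .
  qed
  moreover have "smooth l s 0 = (\<integral>u. l u * normal_density 0 s u * 1 \<partial>lborel)"
    unfolding smooth_shift gd_eq by (simp add: normal_density_def)
  ultimately show ?thesis
    using i1 i0 by (simp add: right_diff_distrib)
qed


lemma asymp_g: "b > 0 \<Longrightarrow> (\<lambda>n. real n * exp (b * sqrt (real n)) / sqrt 2 powr real n) \<longlonglongrightarrow> 0"
  by real_asymp

lemma e_le_pow: "n \<ge> 1 \<Longrightarrow> exp 1 \<le> ((real n + 1) / real n) ^ (n + 1)"
proof -
  assume n: "n \<ge> 1"
  have pos: "real n / (real n + 1) > 0" using n by simp
  have "ln (real n / (real n + 1)) \<le> real n / (real n + 1) - 1" by (rule ln_le_minus_one[OF pos])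
  also have "\<dots> = - 1 / (real n + 1)" by (simp add: field_simps)
  finally have "ln (real n / (real n + 1)) \<le> - 1 / (real n + 1)" .
  moreover have "ln (real n / (real n + 1)) = - ln ((real n + 1) / real n)"
    using n by (simp add: ln_div)
  ultimately have "1 / (real n + 1) \<le> ln ((real n + 1) / real n)" by simp
  then have "1 \<le> real (n + 1) * ln ((real n + 1) / real n)"
    by (simp add: field_simps)
  then have "exp 1 \<le> exp (real (n + 1) * ln ((real n + 1) / real n))" by simp
  also have "\<dots> = exp (ln ((real n + 1) / real n)) ^ (n + 1)" by (rule exp_of_nat_mult)
  also have "\<dots> = ((real n + 1) / real n) ^ (n + 1)" using n by simp
  finally show ?thesis .
qed

lemma fact_upper: "n \<ge> 1 \<Longrightarrow> fact n \<le> exp 1 * real n * (real n / exp 1) ^ n"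
proof (induction n rule: nat_induct_at_least)
  case base then show ?case by simp
next
  case (Suc n)
  have n: "real n \<ge> 1" using Suc by simp
  have "fact (Suc n) = (real n + 1) * fact n" by simp
  also have "\<dots> \<le> (real n + 1) * (exp 1 * real n * (real n / exp 1) ^ n)"
    using Suc.IH by (intro mult_left_mono) auto
  also have "\<dots> \<le> exp 1 * (real n + 1) * ((real n + 1) / exp 1) ^ (n + 1)"
  proof -
    have "real n * (real n / exp 1) ^ n * exp 1 = exp 1 * (real n / exp 1) ^ (n + 1) * exp 1"
      by (simp add: field_simps)
    also have "\<dots> \<le> ((real n + 1) / real n) ^ (n + 1) * (real n / exp 1) ^ (n + 1) * exp 1"
      using e_le_pow[OF Suc.hyps] by (intro mult_right_mono) auto
    also have "\<dots> = ((real n + 1) / exp 1) ^ (n + 1) * exp 1"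
      using n by (simp add: power_mult_distrib[symmetric])
    finally have "real n * (real n / exp 1) ^ n \<le> ((real n + 1) / exp 1) ^ (n + 1)"
      by (simp add: le_divide_eq)
    then have "(exp 1 * (real n + 1)) * (real n * (real n / exp 1) ^ n) \<le> (exp 1 * (real n + 1)) * ((real n + 1) / exp 1) ^ (n + 1)"
      by (rule mult_left_mono) simp
    then show ?thesis by (simp only: mult_ac)
  qed
  finally show ?case by (simp add: add.commute)
qed

definition TT :: "real \<Rightarrow> nat \<Rightarrow> real" where
  "TT s n = sqrt (real n + 1) * 2 ^ n * (1 + pow00 (real n / (exp 1 * s\<^sup>2)) (real n / 2)) / fact n"
definition rr :: "real \<Rightarrow> real \<Rightarrow> nat \<Rightarrow> real" where
  "rr t s n = t + s * sqrt (real n / 2)"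


lemma key_bound:
  assumes t: "t > 0" and s: "s > 0"
  shows "\<exists>C>0. \<forall>n. MM s (rr t s n) / rr t s n ^ n \<le> C * TT s n"
proof -
  define \<beta> where "\<beta> = sqrt 2 * (t / s + s)"
  define K where "K = 4 * exp (s\<^sup>2 / 2) * exp (t\<^sup>2 / s\<^sup>2 + 2 * t) * exp 1"
  have Kpos: "K > 0" unfolding K_def by simp
  have "Bseq (\<lambda>n. real n * exp (\<beta> * sqrt (real n)) / sqrt 2 powr real n)"
  proof -
    have "\<beta> > 0" unfolding \<beta>_def using t s by (intro mult_pos_pos add_pos_pos divide_pos_pos) auto
    then show ?thesis using asymp_g by (intro convergent_imp_Bseq[OF convergentI])
  qed
  then obtain B where B: "B > 0" "\<And>n. norm (real n * exp (\<beta> * sqrt (real n)) / sqrt 2 powr real n) \<le> B"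
    unfolding Bseq_def by blast
  define C where "C = max (K * B) (MM s t)"
  have Cpos: "C > 0" unfolding C_def using Kpos B(1) by (simp add: less_max_iff_disj)
  define sq where "sq = sqrt 2 * exp (1 / 2)"
  have sqpos: "sq > 0" unfolding sq_def by simp
  have sq2: "sq\<^sup>2 = 2 * exp 1"
  proof -
    have "exp (1/2) ^ 2 = exp (1::real)" by (simp add: exp_of_nat_mult[symmetric])
    then show ?thesis unfolding sq_def by (simp add: power_mult_distrib)
  qed
  have "MM s (rr t s n) / rr t s n ^ n \<le> C * TT s n" for n
  proof (cases "n = 0")
    case True
    then show ?thesis
      by (simp add: rr_def TT_def pow00_def C_def) (smt (verit) MM_def exp_gt_zero mult_pos_pos)
  next
    case False
    then have n1: "n \<ge> 1" by simp
    have npos: "real n > 0" using n1 by simp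
    let ?r = "rr t s n"
    have rpos: "?r > 0" unfolding rr_def using t s by (simp add: add_pos_nonneg)
    have sqrtn: "sqrt (real n / 2) = sqrt (real n) / sqrt 2" by (simp add: real_sqrt_divide)
    have E1: "?r\<^sup>2 / s\<^sup>2 + 2 * ?r = (t\<^sup>2 / s\<^sup>2 + 2 * t) + \<beta> * sqrt (real n) + real n / 2"
    proof -
      have h: "sqrt (real n / 2) ^ 2 = real n / 2" by simp
      have h2: "sqrt 2 * sqrt 2 = (2::real)" by simp
      have "?r\<^sup>2 / s\<^sup>2 + 2 * ?r = t\<^sup>2 / s\<^sup>2 + 2 * t + (2 * t / s + 2 * s) * sqrt (real n / 2) + sqrt (real n / 2) ^ 2"
        unfolding rr_def using s by (simp add: field_simps power2_eq_square)
      also have "(2 * t / s + 2 * s) * sqrt (real n / 2) = \<beta> * sqrt (real n)"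
        unfolding \<beta>_def sqrtn using h2 by (simp add: field_simps)
      finally show ?thesis using h by simp
    qed
    have core: "MM s ?r * exp 1 * real n \<le> C * sq ^ n"
    proof -
      have "MM s ?r * exp 1 * real n = K * (real n * exp (\<beta> * sqrt (real n))) * exp (1/2) ^ n"
      proof -
        have "exp (real n / 2) = exp (1/2) ^ n" by (simp add: exp_of_nat_mult[symmetric])
        then show ?thesis unfolding MM_def K_def E1 by (simp add: exp_add mult_ac)
      qed
      also have "real n * exp (\<beta> * sqrt (real n)) \<le> B * sqrt 2 ^ n"
      proof -
        have "real n * exp (\<beta> * sqrt (real n)) / sqrt 2 ^ n \<le> B"
          using B(2)[of n] by (simp add: powr_realpow)
        then show ?thesis by (simp add: divide_le_eq)
      qed
      then have "K * (real n * exp (\<beta> * sqrt (real n))) * exp (1/2) ^ n \<le> K * (B * sqrt 2 ^ n) * exp (1/2) ^ n"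
        using Kpos by (intro mult_right_mono mult_left_mono) auto
      also have "\<dots> = (K * B) * sq ^ n" unfolding sq_def by (simp add: power_mult_distrib mult_ac)
      also have "\<dots> \<le> C * sq ^ n" unfolding C_def using sqpos by (intro mult_right_mono) auto
      finally show ?thesis .
    qed
    define P where "P = pow00 (real n / (exp 1 * s\<^sup>2)) (real n / 2)"
    have P: "P = sqrt (real n / (exp 1 * s\<^sup>2)) ^ n"
    proof -
      have pos: "real n / (exp 1 * s\<^sup>2) > 0" using npos s by simp
      then have "P = (real n / (exp 1 * s\<^sup>2)) powr (real n / 2)" unfolding P_def pow00_def using npos by simp
      also have "\<dots> = sqrt ((real n / (exp 1 * s\<^sup>2)) powr real n)" using pos by (simp add: powr_half_sqrt_powr)
      also have "\<dots> = sqrt (real n / (exp 1 * s\<^sup>2)) ^ n" using pos by (simp add: powr_realpow real_sqrt_power)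
      finally show ?thesis .
    qed
    have Y: "sqrt (real n / (exp 1 * s\<^sup>2)) * (s * sqrt (real n / 2)) = real n / sq"
    proof -
      have "(sqrt (real n / (exp 1 * s\<^sup>2)) * (s * sqrt (real n / 2)))\<^sup>2 = (real n / sq)\<^sup>2"
        using s sq2 sqpos by (simp add: power_mult_distrib power_divide field_simps power2_eq_square)
      then show ?thesis using s sqpos npos
        by (subst (asm) power2_eq_iff_nonneg) auto
    qed
    have PR: "(real n / sq) ^ n \<le> P * ?r ^ n"
    proof -
      have "real n / sq \<le> sqrt (real n / (exp 1 * s\<^sup>2)) * ?r"
        unfolding Y[symmetric] rr_def using t by (intro mult_left_mono) auto
      then have "(real n / sq) ^ n \<le> (sqrt (real n / (exp 1 * s\<^sup>2)) * ?r) ^ n"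
        using npos sqpos by (intro power_mono) auto
      then show ?thesis unfolding P by (simp add: power_mult_distrib)
    qed
    have Ppos: "P \<ge> 0" unfolding P by simp
    have MMpos: "MM s ?r > 0" unfolding MM_def by simp
    have "MM s ?r * fact n \<le> MM s ?r * (exp 1 * real n * (real n / exp 1) ^ n)"
      using fact_upper[OF n1] MMpos by (intro mult_left_mono) auto
    also have "\<dots> = (MM s ?r * exp 1 * real n) * (real n / exp 1) ^ n" by (simp add: mult_ac)
    also have "\<dots> \<le> (C * sq ^ n) * (real n / exp 1) ^ n"
      using core by (intro mult_right_mono) auto
    also have "\<dots> = C * 2 ^ n * (real n / sq) ^ n"
    proof -
      have "sq * (real n / exp 1) = 2 * (real n / sq)"
        using sq2 sqpos by (simp add: field_simps power2_eq_square)
      then have "sq ^ n * (real n / exp 1) ^ n = 2 ^ n * (real n / sq) ^ n"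
        by (metis power_mult_distrib)
      then show ?thesis by (simp add: mult_ac)
    qed
    also have "\<dots> \<le> C * 2 ^ n * (P * ?r ^ n)"
      using PR Cpos by (intro mult_left_mono) auto
    finally have main: "MM s ?r * fact n \<le> C * 2 ^ n * P * ?r ^ n" by (simp add: mult_ac)
    have "MM s ?r / ?r ^ n \<le> C * 2 ^ n * P / fact n"
      using main rpos by (simp add: divide_le_eq le_divide_eq mult_ac)
    also have "\<dots> \<le> C * TT s n"
    proof -
      have "2 ^ n * P \<le> sqrt (real n + 1) * 2 ^ n * (1 + P)"
      proof -
        have "2 ^ n * P \<le> 1 * 2 ^ n * (1 + P)" using Ppos by simp
        also have "\<dots> \<le> sqrt (real n + 1) * 2 ^ n * (1 + P)"
          using Ppos by (intro mult_right_mono) auto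
        finally show ?thesis .
      qed
      then have "C * (2 ^ n * P) / fact n \<le> C * (sqrt (real n + 1) * 2 ^ n * (1 + P)) / fact n"
        using Cpos by (intro divide_right_mono mult_left_mono) auto
      then show ?thesis unfolding TT_def P_def by (simp add: mult_ac)
    qed
    finally show ?thesis .
  qed
  then show ?thesis using Cpos by blast
qed


lemma tail_bound:
  assumes s: "s > 0" and lm: "l \<in> borel_measurable borel" and lb: "\<And>u. \<bar>l u\<bar> \<le> \<bar>u\<bar>"
    and th: "0 \<le> \<theta>" "\<theta> \<le> t" and tr: "t \<le> r" and k1: "k \<ge> 1"
  shows "\<bar>(\<Sum>n. aa l s (n + k) * \<theta> ^ (n + k))\<bar> \<le> t ^ k * (MM s r / r ^ k)"
proof -
  have t0: "t \<ge> 0" using th by simp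
  have r0: "r \<ge> 0" using th tr by simp
  have rpos_or: "r > 0 \<or> r = 0" using r0 by auto
  define T where "T = (\<lambda>n. \<bar>aa l s (n + k) * \<theta> ^ (n + k)\<bar>)"
  have Tle: "T n \<le> t ^ k * (\<bar>aa l s (n + k)\<bar> * r ^ n)" for n
  proof -
    have "\<theta> ^ (n + k) = \<theta> ^ k * \<theta> ^ n" by (simp add: power_add)
    also have "\<dots> \<le> t ^ k * r ^ n"
      using th tr by (intro mult_mono power_mono) auto
    finally have "\<theta> ^ (n + k) \<le> t ^ k * r ^ n" .
    then have "\<bar>aa l s (n + k)\<bar> * \<theta> ^ (n + k) \<le> \<bar>aa l s (n + k)\<bar> * (t ^ k * r ^ n)"
      by (rule mult_left_mono) simp
    moreover have "T n = \<bar>aa l s (n + k)\<bar> * \<theta> ^ (n + k)"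
      unfolding T_def using th by (simp add: abs_mult)
    ultimately show ?thesis by (simp only: mult_ac)
  qed
  show ?thesis
  proof (cases "r = 0")
    case True
    then have "t = 0" "\<theta> = 0" using th tr by auto
    show ?thesis using \<open>\<theta> = 0\<close> \<open>t = 0\<close> k1 by (simp add: power_0_left)
  next
    case False
    then have rpos: "r > 0" using r0 by simp
    have part: "(\<Sum>n<N. T n) \<le> t ^ k * (MM s r / r ^ k)" for N
    proof -
      have "(\<Sum>n<N. T n) \<le> (\<Sum>n<N. t ^ k * (\<bar>aa l s (n + k)\<bar> * r ^ n))"
        by (intro sum_mono Tle)
      also have "\<dots> = t ^ k / r ^ k * (\<Sum>n<N. \<bar>aa l s (n + k)\<bar> * r ^ (n + k))"
        using rpos by (simp add: sum_distrib_left power_add field_simps)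
      finally have A: "(\<Sum>n<N. T n) \<le> t ^ k / r ^ k * (\<Sum>n<N. \<bar>aa l s (n + k)\<bar> * r ^ (n + k))" .
      have "(\<Sum>n<N. \<bar>aa l s (n + k)\<bar> * r ^ (n + k)) = (\<Sum>m\<in>{k..<N + k}. \<bar>aa l s m\<bar> * r ^ m)"
        using sum.shift_bounds_nat_ivl[of "\<lambda>m. \<bar>aa l s m\<bar> * r ^ m" 0 k N]
        by (simp add: atLeast0LessThan)
      also have "\<dots> \<le> (\<Sum>m<N + k. \<bar>aa l s m\<bar> * r ^ m)"
        using r0 by (intro sum_mono2) auto
      also have "\<dots> \<le> MM s r" by (rule aa_major[OF s r0 lm lb])
      finally have Bq: "(\<Sum>n<N. \<bar>aa l s (n + k)\<bar> * r ^ (n + k)) \<le> MM s r" .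
      have "t ^ k / r ^ k * (\<Sum>n<N. \<bar>aa l s (n + k)\<bar> * r ^ (n + k)) \<le> t ^ k / r ^ k * MM s r"
        using Bq t0 rpos by (intro mult_left_mono) auto
      with A show ?thesis by simp
    qed
    have sT: "summable T"
      by (rule summableI_nonneg_bounded[OF _ part]) (simp add: T_def)
    have "\<bar>(\<Sum>n. aa l s (n + k) * \<theta> ^ (n + k))\<bar> \<le> (\<Sum>n. T n)"
      unfolding T_def by (rule summable_rabs) (use sT in \<open>simp add: T_def\<close>)
    also have "\<dots> \<le> t ^ k * (MM s r / r ^ k)" by (rule suminf_le_const[OF sT part])
    finally show ?thesis .
  qed
qed

theorem lemma1:
  fixes \<theta>s \<sigma> :: real
  assumes "\<theta>s > 0" and "\<sigma> > 0"
  shows "\<exists>C>0. \<forall>(l::real \<Rightarrow> real) (k::nat).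
           1-lipschitz_on UNIV l \<longrightarrow> l 0 = 0 \<longrightarrow> k \<ge> 1 \<longrightarrow>
           (\<exists>c :: nat \<Rightarrow> real.
              (\<forall>x\<le>k-1. \<bar>c x\<bar> \<le> C * sqrt (real x + 1) * 2 ^ x
                   * (1 + pow00 (real x / (exp 1 * \<sigma>\<^sup>2)) (real x / 2)) / fact x) \<and>
              (\<forall>\<theta>\<in>{0..\<theta>s}. \<bar>smooth l \<sigma> \<theta> - smooth l \<sigma> 0
                   - exp (- \<theta>) * (\<Sum>x\<le>k-1. c x * \<theta> ^ x)\<bar>
                 \<le> C * sqrt (real k + 1) * (2 * \<theta>s) ^ k
                   * (1 + pow00 (real k / (exp 1 * \<sigma>\<^sup>2)) (real k / 2)) / fact k))"
proof -
  have t: "\<theta>s > 0" and s: "\<sigma> > 0" using assms by auto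
  obtain C where Cpos: "C > 0" and CB: "\<And>n. MM \<sigma> (rr \<theta>s \<sigma> n) / rr \<theta>s \<sigma> n ^ n \<le> C * TT \<sigma> n"
    using key_bound[OF t s] by blast
  have rr_ge: "rr \<theta>s \<sigma> n \<ge> \<theta>s" for n unfolding rr_def using s by simp
  have rr_pos: "rr \<theta>s \<sigma> n > 0" for n using rr_ge[of n] t by simp
  show ?thesis
  proof (intro exI[of _ C] conjI Cpos allI impI)
    fix l :: "real \<Rightarrow> real" and k :: nat
    assume lip: "1-lipschitz_on UNIV l" and l0: "l 0 = 0" and k1: "k \<ge> 1"
    have lm: "l \<in> borel_measurable borel"
      by (rule borel_measurable_continuous_onI[OF lipschitz_on_continuous_on[OF lip]])
    have lb: "\<bar>l u\<bar> \<le> \<bar>u\<bar>" for u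
      using lipschitz_onD[OF lip, of u 0] l0 by (simp add: dist_real_def)
    show "\<exists>c :: nat \<Rightarrow> real.
              (\<forall>x\<le>k-1. \<bar>c x\<bar> \<le> C * sqrt (real x + 1) * 2 ^ x
                   * (1 + pow00 (real x / (exp 1 * \<sigma>\<^sup>2)) (real x / 2)) / fact x) \<and>
              (\<forall>\<theta>\<in>{0..\<theta>s}. \<bar>smooth l \<sigma> \<theta> - smooth l \<sigma> 0
                   - exp (- \<theta>) * (\<Sum>x\<le>k-1. c x * \<theta> ^ x)\<bar>
                 \<le> C * sqrt (real k + 1) * (2 * \<theta>s) ^ k
                   * (1 + pow00 (real k / (exp 1 * \<sigma>\<^sup>2)) (real k / 2)) / fact k)"
    proof (intro exI[of _ "aa l \<sigma>"] conjI ballI allI impI)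
      fix x :: nat
      let ?r = "rr \<theta>s \<sigma> x"
      have "\<bar>aa l \<sigma> x\<bar> * ?r ^ x \<le> (\<Sum>n<Suc x. \<bar>aa l \<sigma> n\<bar> * ?r ^ n)"
        using rr_pos[of x] by (simp add: sum_nonneg)
      also have "\<dots> \<le> MM \<sigma> ?r" by (rule aa_major[OF s _ lm lb]) (use rr_pos[of x] in simp)
      finally have "\<bar>aa l \<sigma> x\<bar> \<le> MM \<sigma> ?r / ?r ^ x"
        using rr_pos[of x] by (simp add: le_divide_eq)
      also have "\<dots> \<le> C * TT \<sigma> x" by (rule CB)
      finally show "\<bar>aa l \<sigma> x\<bar> \<le> C * sqrt (real x + 1) * 2 ^ x
                   * (1 + pow00 (real x / (exp 1 * \<sigma>\<^sup>2)) (real x / 2)) / fact x"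
        unfolding TT_def by (simp add: mult_ac)
    next
      fix \<theta> assume th: "\<theta> \<in> {0..\<theta>s}"
      let ?r = "rr \<theta>s \<sigma> k"
      define S where "S = (\<lambda>n. aa l \<sigma> n * \<theta> ^ n)"
      have sums: "S sums (exp \<theta> * (smooth l \<sigma> \<theta> - smooth l \<sigma> 0))"
        unfolding S_def h_repr[OF s lm lb] by (rule aa_sums[OF s lm lb])
      have F: "smooth l \<sigma> \<theta> - smooth l \<sigma> 0 = exp (- \<theta>) * suminf S"
        using sums_unique[OF sums] by (simp add: exp_minus field_simps)
      have split: "suminf S = (\<Sum>n. S (n + k)) + (\<Sum>i<k. S i)"
        by (rule suminf_split_initial_segment) (use sums in \<open>simp add: sums_iff\<close>)
      have kk: "{..k - 1} = {..<k}" using k1 by auto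
      have sk: "(\<Sum>x\<le>k-1. aa l \<sigma> x * \<theta> ^ x) = (\<Sum>i<k. S i)" unfolding kk S_def by (rule refl)
      have "\<bar>smooth l \<sigma> \<theta> - smooth l \<sigma> 0 - exp (- \<theta>) * (\<Sum>x\<le>k-1. aa l \<sigma> x * \<theta> ^ x)\<bar>
            = \<bar>exp (- \<theta>) * ((\<Sum>n. S (n + k)) + (\<Sum>i<k. S i)) - exp (- \<theta>) * (\<Sum>i<k. S i)\<bar>"
        by (simp only: F split sk)
      also have "\<dots> = exp (- \<theta>) * \<bar>\<Sum>n. S (n + k)\<bar>"
        by (simp add: algebra_simps abs_mult)
      also have "\<dots> \<le> 1 * \<bar>\<Sum>n. S (n + k)\<bar>"
        using th by (intro mult_right_mono) auto
      also have "\<dots> \<le> \<theta>s ^ k * (MM \<sigma> ?r / ?r ^ k)"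
        unfolding S_def using tail_bound[OF s lm lb _ _ rr_ge[of k] k1, of \<theta>] th by simp
      also have "\<dots> \<le> \<theta>s ^ k * (C * TT \<sigma> k)"
        using CB[of k] t by (intro mult_left_mono) auto
      also have "\<dots> = C * sqrt (real k + 1) * (2 * \<theta>s) ^ k
                   * (1 + pow00 (real k / (exp 1 * \<sigma>\<^sup>2)) (real k / 2)) / fact k"
        unfolding TT_def by (simp add: power_mult_distrib mult_ac)
      finally show "\<bar>smooth l \<sigma> \<theta> - smooth l \<sigma> 0 - exp (- \<theta>) * (\<Sum>x\<le>k-1. aa l \<sigma> x * \<theta> ^ x)\<bar>
            \<le> C * sqrt (real k + 1) * (2 * \<theta>s) ^ k
                   * (1 + pow00 (real k / (exp 1 * \<sigma>\<^sup>2)) (real k / 2)) / fact k" .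
    qed
  qed
qed

end
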